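(* If $m$ is a power of two with $m\geq 4$, then $\mathcal{G}^4_{n,m}$ is transmission irregular for every odd positive integer $n$ such that $n+2$ does not divide $m+2$.
   Context: Let $G_4$ be the (disconnected) graph with vertices $a,b,c,d,e,f$ and edges $ab,ac,bc,de,ef$. For positive integers $n,m$, $\mathcal{G}^4_{n,m}$ is obtained from $G_4$ by adding three new paths with new internal vertices: a path from $b$ to $d$ with $n$ internal vertices, a path from $c$ to $e$ with $n$ internal vertices, and a path from $d$ to $e$ with $m$ internal vertices (a path with $s$ internal vertices has length $s+1$). The transmission of a vertex $u$ in a connected graph $G$ is $Tr_G(u)=\sum_{v}d_G(u,v)$; a graph is transmission irregular if no two of its vertices have equal transmission. *)

theory Defs
  imports Main
begin

definition has_walk :: "'a set \<Rightarrow> ('a \<Rightarrow> 'a \<Rightarrow> bool) \<Rightarrow> 'a \<Rightarrow> 'a \<Rightarrow> nat \<Rightarrow> bool" where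
  "has_walk V adj u v k \<longleftrightarrow>
     (\<exists>xs. length xs = Suc k \<and> set xs \<subseteq> V \<and> hd xs = u \<and> last xs = v \<and>
           (\<forall>i<k. adj (xs ! i) (xs ! Suc i)))"

text \<open>Distance: length of a shortest walk (used only for connected graphs).\<close>
definition gdist :: "'a set \<Rightarrow> ('a \<Rightarrow> 'a \<Rightarrow> bool) \<Rightarrow> 'a \<Rightarrow> 'a \<Rightarrow> nat" where
  "gdist V adj u v = (LEAST k. has_walk V adj u v k)"

definition connected_graph :: "'a set \<Rightarrow> ('a \<Rightarrow> 'a \<Rightarrow> bool) \<Rightarrow> bool" where
  "connected_graph V adj \<longleftrightarrow> (\<forall>u\<in>V. \<forall>v\<in>V. \<exists>k. has_walk V adj u v k)"

definition transmission :: "'a set \<Rightarrow> ('a \<Rightarrow> 'a \<Rightarrow> bool) \<Rightarrow> 'a \<Rightarrow> nat" where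
  "transmission V adj u = (\<Sum>v\<in>V. gdist V adj u v)"

definition transmission_irregular :: "'a set \<Rightarrow> ('a \<Rightarrow> 'a \<Rightarrow> bool) \<Rightarrow> bool" where
  "transmission_irregular V adj \<longleftrightarrow> inj_on (transmission V adj) V"

text \<open>Vertices a..f of G_4, and internal vertices P1 i (path b--d), P2 i (path c--e),
  P3 i (path d--e), indexed from 1.\<close>
datatype vtx = VA | VB | VC | VD | VE | VF | P1 nat | P2 nat | P3 nat

definition G4_verts :: "nat \<Rightarrow> nat \<Rightarrow> vtx set" where
  "G4_verts n m = {VA, VB, VC, VD, VE, VF} \<union> P1 ` {1..n} \<union> P2 ` {1..n} \<union> P3 ` {1..m}"

definition path_edge :: "vtx \<Rightarrow> vtx \<Rightarrow> (nat \<Rightarrow> vtx) \<Rightarrow> nat \<Rightarrow> vtx \<Rightarrow> vtx \<Rightarrow> bool" where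
  "path_edge s t p k x y \<longleftrightarrow>
     (x = s \<and> y = p 1) \<or> (\<exists>i. 1 \<le> i \<and> i < k \<and> x = p i \<and> y = p (Suc i)) \<or> (x = p k \<and> y = t)"

definition G4_dir_edge :: "nat \<Rightarrow> nat \<Rightarrow> vtx \<Rightarrow> vtx \<Rightarrow> bool" where
  "G4_dir_edge n m x y \<longleftrightarrow>
     (x, y) \<in> {(VA, VB), (VA, VC), (VB, VC), (VD, VE), (VE, VF)} \<or>
     path_edge VB VD P1 n x y \<or> path_edge VC VE P2 n x y \<or> path_edge VD VE P3 m x y"

definition G4_adj :: "nat \<Rightarrow> nat \<Rightarrow> vtx \<Rightarrow> vtx \<Rightarrow> bool" where
  "G4_adj n m x y \<longleftrightarrow> G4_dir_edge n m x y \<or> G4_dir_edge n m y x"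

end

theory Submission
  imports Defs
begin


lemma walk_snoc:
  assumes "has_walk V adj u w k" "adj w v" "v \<in> V"
  shows "has_walk V adj u v (Suc k)"
proof -
  obtain xs where xs: "length xs = Suc k" "set xs \<subseteq> V" "hd xs = u" "last xs = w"
     "\<forall>i<k. adj (xs ! i) (xs ! Suc i)" using assms(1) unfolding has_walk_def by blast
  have "xs \<noteq> []" using xs(1) by auto
  have L: "xs ! k = w" using xs(1,4) \<open>xs \<noteq> []\<close> by (simp add: last_conv_nth)
  show ?thesis unfolding has_walk_def
  proof (intro exI[of _ "xs @ [v]"] conjI allI impI)
    show "length (xs @ [v]) = Suc (Suc k)" using xs by simp
    show "set (xs @ [v]) \<subseteq> V" using xs assms by auto
    show "hd (xs @ [v]) = u" using xs \<open>xs \<noteq> []\<close> by simp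
    show "last (xs @ [v]) = v" by simp
    fix i assume "i < Suc k"
    then consider "i < k" | "i = k" by linarith
    then show "adj ((xs @ [v]) ! i) ((xs @ [v]) ! Suc i)"
    proof cases
      case 1 then show ?thesis using xs by (simp add: nth_append)
    next
      case 2 then show ?thesis using xs L assms(2) by (simp add: nth_append)
    qed
  qed
qed

lemma gdist_char:
  assumes uV: "u \<in> V"
  and D0: "D u = 0"
  and lip: "\<And>x y. x \<in> V \<Longrightarrow> y \<in> V \<Longrightarrow> adj x y \<Longrightarrow> D y \<le> D x + 1"
  and wit: "\<And>v. v \<in> V \<Longrightarrow> v \<noteq> u \<Longrightarrow> \<exists>w\<in>V. adj w v \<and> D w + 1 = D v"
  and vV: "v \<in> V"
  shows "gdist V adj u v = D v"
proof -
  have walk: "\<And>v. v \<in> V \<Longrightarrow> D v = k \<Longrightarrow> has_walk V adj u v k" for k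
  proof (induction k arbitrary: v)
    case 0
    have "v = u"
    proof (rule ccontr)
      assume "v \<noteq> u" 
      then obtain w where "D w + 1 = D v" using wit 0 by blast
      then show False using 0 by simp
    qed
    then show ?case unfolding has_walk_def using uV by (intro exI[of _ "[u]"]) auto
  next
    case (Suc k)
    have "v \<noteq> u" using Suc.prems D0 by auto
    then obtain w where w: "w \<in> V" "adj w v" "D w + 1 = D v" using wit Suc.prems by blast
    then have "has_walk V adj u w k" using Suc.IH[OF w(1)] w(3) Suc.prems(2) by simp
    then show ?case using walk_snoc[where adj=adj and V=V, OF _ w(2) Suc.prems(1)] by blast
  qed
  have lower: "D v \<le> k" if hw: "has_walk V adj u v k" for k
  proof -
    obtain xs where xs: "length xs = Suc k" "set xs \<subseteq> V" "hd xs = u" "last xs = v"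
     "\<forall>i<k. adj (xs ! i) (xs ! Suc i)" using hw unfolding has_walk_def by blast
    have "xs \<noteq> []" using xs(1) by auto
    have "D (xs ! i) \<le> i" if "i \<le> k" for i
      using that
    proof (induction i)
      case 0 then show ?case using xs D0 \<open>xs \<noteq> []\<close> by (simp add: hd_conv_nth)
    next
      case (Suc i)
      have "xs ! i \<in> V" "xs ! Suc i \<in> V" using Suc.prems xs(1,2) by (auto simp: subset_iff)
      then have "D (xs ! Suc i) \<le> D (xs ! i) + 1" using lip xs(5) Suc.prems by auto
      then show ?case using Suc by simp
    qed
    then have "D (xs ! k) \<le> k" by simp
    then show ?thesis using xs(1,4) \<open>xs \<noteq> []\<close> by (simp add: last_conv_nth)
  qed
  show ?thesis unfolding gdist_def
  proof (rule Least_equality)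
    show "has_walk V adj u v (D v)" using walk vV by blast
    show "\<And>y. has_walk V adj u v y \<Longrightarrow> D v \<le> y" using lower by blast
  qed
qed

datatype lc = LD nat | LE nat | LQ nat | LA | LF

fun ldist :: "nat \<Rightarrow> nat \<Rightarrow> lc \<Rightarrow> lc \<Rightarrow> nat" where
  "ldist N m (LD h) (LD k) = (h - k) + (k - h)"
| "ldist N m (LE h) (LE k) = (h - k) + (k - h)"
| "ldist N m (LD h) (LE k) = 1 + min (h + k) (2 * N - h - k)"
| "ldist N m (LE h) (LD k) = 1 + min (h + k) (2 * N - h - k)"
| "ldist N m (LD h) (LQ j) = h + min j (m + 2 - j)"
| "ldist N m (LQ j) (LD h) = h + min j (m + 2 - j)"
| "ldist N m (LE h) (LQ j) = h + min (j + 1) (m + 1 - j)"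
| "ldist N m (LQ j) (LE h) = h + min (j + 1) (m + 1 - j)"
| "ldist N m (LQ j) (LQ k) = min ((j - k) + (k - j)) (m + 2 - ((j - k) + (k - j)))"
| "ldist N m LA (LD h) = N + 1 - h"
| "ldist N m (LD h) LA = N + 1 - h"
| "ldist N m LA (LE h) = N + 1 - h"
| "ldist N m (LE h) LA = N + 1 - h"
| "ldist N m LA (LQ j) = N + 1 + min j (m + 1 - j)"
| "ldist N m (LQ j) LA = N + 1 + min j (m + 1 - j)"
| "ldist N m LA LF = N + 2"
| "ldist N m LF LA = N + 2"
| "ldist N m LA LA = 0"
| "ldist N m LF LF = 0"
| "ldist N m LF (LD h) = 2 + h"
| "ldist N m (LD h) LF = 2 + h"
| "ldist N m LF (LE h) = 1 + h"
| "ldist N m (LE h) LF = 1 + h"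
| "ldist N m LF (LQ j) = 1 + min (j + 1) (m + 1 - j)"
| "ldist N m (LQ j) LF = 1 + min (j + 1) (m + 1 - j)"

fun loc :: "nat \<Rightarrow> vtx \<Rightarrow> lc" where
  "loc n VA = LA" | "loc n VB = LD (n + 1)" | "loc n VC = LE (n + 1)"
| "loc n VD = LD 0" | "loc n VE = LE 0" | "loc n VF = LF"
| "loc n (P1 i) = LD (n + 1 - i)" | "loc n (P2 i) = LE (n + 1 - i)" | "loc n (P3 j) = LQ j"


fun valid :: "nat \<Rightarrow> nat \<Rightarrow> lc \<Rightarrow> bool" where
  "valid N m (LD h) = (h \<le> N)" | "valid N m (LE h) = (h \<le> N)"
| "valid N m (LQ j) = (1 \<le> j \<and> j \<le> m)" | "valid N m LA = True" | "valid N m LF = True"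

fun lnbrs :: "nat \<Rightarrow> nat \<Rightarrow> lc \<Rightarrow> lc list" where
  "lnbrs N m (LD h) = (if 0 < h then [LD (h - 1)] else []) @ (if h < N then [LD (h + 1)] else [])
      @ (if h = 0 then [LE 0, LQ 1] else []) @ (if h = N then [LA, LE N] else [])"
| "lnbrs N m (LE h) = (if 0 < h then [LE (h - 1)] else []) @ (if h < N then [LE (h + 1)] else [])
      @ (if h = 0 then [LD 0, LQ m, LF] else []) @ (if h = N then [LA, LD N] else [])"
| "lnbrs N m (LQ j) = [if j = 1 then LD 0 else LQ (j - 1), if j = m then LE 0 else LQ (j + 1)]"
| "lnbrs N m LA = [LD N, LE N]"
| "lnbrs N m LF = [LE 0]"

lemma lnbrs_ex:
  "(\<exists>w\<in>set (lnbrs N m (LD h)). P w) \<longleftrightarrow> (0<h \<and> P (LD (h-1))) \<or> (h<N \<and> P (LD (h+1))) \<or> (h=0 \<and> (P (LE 0) \<or> P (LQ 1))) \<or> (h=N \<and> (P LA \<or> P (LE N)))"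
  "(\<exists>w\<in>set (lnbrs N m (LE h)). P w) \<longleftrightarrow> (0<h \<and> P (LE (h-1))) \<or> (h<N \<and> P (LE (h+1))) \<or> (h=0 \<and> (P (LD 0) \<or> P (LQ m) \<or> P LF)) \<or> (h=N \<and> (P LA \<or> P (LD N)))"
  "(\<exists>w\<in>set (lnbrs N m (LQ j)). P w) \<longleftrightarrow> P (if j = 1 then LD 0 else LQ (j - 1)) \<or> P (if j = m then LE 0 else LQ (j + 1))"
  "(\<exists>w\<in>set (lnbrs N m LA). P w) \<longleftrightarrow> P (LD N) \<or> P (LE N)"
  "(\<exists>w\<in>set (lnbrs N m LF). P w) \<longleftrightarrow> P (LE 0)"
  by auto

fun lwit :: "nat \<Rightarrow> nat \<Rightarrow> lc \<Rightarrow> lc \<Rightarrow> lc" where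
  "lwit N m (LD a) (LD h) = (if a < h then LD (h - 1) else LD (h + 1))"
| "lwit N m (LD a) (LE h) = (if a + h \<le> N then (if 0 < h then LE (h - 1) else LD 0)
                              else (if h < N then LE (h + 1) else LD N))"
| "lwit N m (LD a) (LQ j) = (if j \<le> m + 2 - j then (if j = 1 then LD 0 else LQ (j - 1))
                              else (if j = m then LE 0 else LQ (j + 1)))"
| "lwit N m (LD a) LA = LD N"
| "lwit N m (LD a) LF = LE 0"
| "lwit N m (LE a) (LE h) = (if a < h then LE (h - 1) else LE (h + 1))"
| "lwit N m (LE a) (LD h) = (if a + h \<le> N then (if 0 < h then LD (h - 1) else LE 0)
                              else (if h < N then LD (h + 1) else LE N))"
| "lwit N m (LE a) (LQ j) = (if j + 1 \<le> m + 1 - j then (if j = 1 then LD 0 else LQ (j - 1))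
                              else (if j = m then LE 0 else LQ (j + 1)))"
| "lwit N m (LE a) LA = LE N"
| "lwit N m (LE a) LF = LE 0"
| "lwit N m (LQ a) (LD h) = (if 0 < h then LD (h - 1) else if a \<le> m + 2 - a then LQ 1 else LE 0)"
| "lwit N m (LQ a) (LE h) = (if 0 < h then LE (h - 1) else if a + 1 \<le> m + 1 - a then LD 0 else LQ m)"
| "lwit N m (LQ a) (LQ j) = (if (a < j \<and> j - a \<le> m + 2 - (j - a)) then LQ (j - 1)
                              else if (j < a \<and> a - j \<le> m + 2 - (a - j)) then LQ (j + 1)
                              else if a < j then (if j = m then LE 0 else LQ (j + 1))
                              else (if j = 1 then LD 0 else LQ (j - 1)))"
| "lwit N m (LQ a) LA = (if a \<le> m + 1 - a then LD N else LE N)"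
| "lwit N m (LQ a) LF = LE 0"
| "lwit N m LA (LD h) = (if h < N then LD (h + 1) else LA)"
| "lwit N m LA (LE h) = (if h < N then LE (h + 1) else LA)"
| "lwit N m LA (LQ j) = (if j \<le> m + 1 - j then (if j = 1 then LD 0 else LQ (j - 1))
                              else (if j = m then LE 0 else LQ (j + 1)))"
| "lwit N m LA LF = LE 0"
| "lwit N m LF (LD h) = (if 0 < h then LD (h - 1) else LE 0)"
| "lwit N m LF (LE h) = (if 0 < h then LE (h - 1) else LF)"
| "lwit N m LF (LQ j) = (if j + 1 \<le> m + 1 - j then (if j = 1 then LD 0 else LQ (j - 1))
                              else (if j = m then LE 0 else LQ (j + 1)))"
| "lwit N m LF LA = LE N"
| "lwit N m s y = s"
lemma llip0:
  assumes "N \<ge> 2" "m \<ge> 1" "valid N m s" "h < N"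
  shows "ldist N m s (LD h) \<le> ldist N m s (LD (h+1)) + 1 \<and> ldist N m s (LD (h+1)) \<le> ldist N m s (LD h) + 1"
  using assms by (cases s) (auto simp: min_def)
lemma llip1:
  assumes "N \<ge> 2" "m \<ge> 1" "valid N m s" "h < N"
  shows "ldist N m s (LE h) \<le> ldist N m s (LE (h+1)) + 1 \<and> ldist N m s (LE (h+1)) \<le> ldist N m s (LE h) + 1"
  using assms by (cases s) (auto simp: min_def)
lemma llip2:
  assumes "N \<ge> 2" "m \<ge> 1" "valid N m s" "True"
  shows "ldist N m s (LD 0) \<le> ldist N m s (LE 0) + 1 \<and> ldist N m s (LE 0) \<le> ldist N m s (LD 0) + 1"
  using assms by (cases s) (auto simp: min_def)
lemma llip3:
  assumes "N \<ge> 2" "m \<ge> 1" "valid N m s" "True"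
  shows "ldist N m s (LD 0) \<le> ldist N m s (LQ 1) + 1 \<and> ldist N m s (LQ 1) \<le> ldist N m s (LD 0) + 1"
  using assms by (cases s) (auto simp: min_def)
lemma llip4:
  assumes "N \<ge> 2" "m \<ge> 1" "valid N m s" "True"
  shows "ldist N m s (LE 0) \<le> ldist N m s (LQ m) + 1 \<and> ldist N m s (LQ m) \<le> ldist N m s (LE 0) + 1"
  using assms by (cases s) (auto simp: min_def)
lemma llip5:
  assumes "N \<ge> 2" "m \<ge> 1" "valid N m s" "True"
  shows "ldist N m s (LE 0) \<le> ldist N m s (LF) + 1 \<and> ldist N m s (LF) \<le> ldist N m s (LE 0) + 1"
  using assms by (cases s) (auto simp: min_def)
lemma llip6:
  assumes "N \<ge> 2" "m \<ge> 1" "valid N m s" "True"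
  shows "ldist N m s (LD N) \<le> ldist N m s (LA) + 1 \<and> ldist N m s (LA) \<le> ldist N m s (LD N) + 1"
  using assms by (cases s) (auto simp: min_def)
lemma llip7:
  assumes "N \<ge> 2" "m \<ge> 1" "valid N m s" "True"
  shows "ldist N m s (LE N) \<le> ldist N m s (LA) + 1 \<and> ldist N m s (LA) \<le> ldist N m s (LE N) + 1"
  using assms by (cases s) (auto simp: min_def)
lemma llip8:
  assumes "N \<ge> 2" "m \<ge> 1" "valid N m s" "True"
  shows "ldist N m s (LD N) \<le> ldist N m s (LE N) + 1 \<and> ldist N m s (LE N) \<le> ldist N m s (LD N) + 1"
  using assms by (cases s) (auto simp: min_def)
lemma llipQQ:
  assumes "1 \<le> a" "a \<le> m" "1 \<le> j" "j < m"
  shows "ldist N m (LQ a) (LQ j) \<le> ldist N m (LQ a) (LQ (j+1)) + 1 \<and> ldist N m (LQ a) (LQ (j+1)) \<le> ldist N m (LQ a) (LQ j) + 1"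
proof (cases "a \<le> j")
  case True
  then obtain d where "j = a + d" using le_Suc_ex by blast
  then show ?thesis using assms by (simp add: min_def) arith
next
  case False
  then have "j < a" by simp
  then obtain d where "a = Suc (j + d)" using less_imp_Suc_add by blast
  then show ?thesis using assms by (simp add: min_def) arith
qed
lemma llip9:
  assumes "N \<ge> 2" "m \<ge> 1" "valid N m s" "1 \<le> j \<and> j < m"
  shows "ldist N m s (LQ j) \<le> ldist N m s (LQ (j+1)) + 1 \<and> ldist N m s (LQ (j+1)) \<le> ldist N m s (LQ j) + 1"
proof (cases s)
  case (LQ a)
  then show ?thesis using llipQQ[of a m j N] assms by simp
qed (use assms in \<open>auto simp: min_def\<close>)

lemma lwit_ok_D:
  assumes "N \<ge> 2" "m \<ge> 1" "valid N m (LD a)" "valid N m y" "y \<noteq> (LD a)"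
  shows "ldist N m (LD a) (lwit N m (LD a) y) + 1 = ldist N m (LD a) y"
  using assms
  by (cases y) (auto simp: min_def)
lemma lwit_ok_E:
  assumes "N \<ge> 2" "m \<ge> 1" "valid N m (LE a)" "valid N m y" "y \<noteq> (LE a)"
  shows "ldist N m (LE a) (lwit N m (LE a) y) + 1 = ldist N m (LE a) y"
  using assms
  by (cases y) (auto simp: min_def)
lemma lwit_ok_A:
  assumes "N \<ge> 2" "m \<ge> 1" "valid N m (LA)" "valid N m y" "y \<noteq> (LA)"
  shows "ldist N m (LA) (lwit N m (LA) y) + 1 = ldist N m (LA) y"
  using assms
  by (cases y) (auto simp: min_def)
lemma lwit_ok_F:
  assumes "N \<ge> 2" "m \<ge> 1" "valid N m (LF)" "valid N m y" "y \<noteq> (LF)"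
  shows "ldist N m (LF) (lwit N m (LF) y) + 1 = ldist N m (LF) y"
  using assms
  by (cases y) (auto simp: min_def)
lemma lwit_ok_QD:
  assumes "N \<ge> 2" "m \<ge> 1" "valid N m (LQ a)" "valid N m (LD h)" "(LD h) \<noteq> (LQ a)"
  shows "ldist N m (LQ a) (lwit N m (LQ a) (LD h)) + 1 = ldist N m (LQ a) (LD h)"
  using assms
  by (auto simp: min_def)
lemma lwit_ok_QE:
  assumes "N \<ge> 2" "m \<ge> 1" "valid N m (LQ a)" "valid N m (LE h)" "(LE h) \<noteq> (LQ a)"
  shows "ldist N m (LQ a) (lwit N m (LQ a) (LE h)) + 1 = ldist N m (LQ a) (LE h)"
  using assms
  by (auto simp: min_def)
lemma lwit_ok_QA:
  assumes "N \<ge> 2" "m \<ge> 1" "valid N m (LQ a)" "valid N m (LA)" "(LA) \<noteq> (LQ a)"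
  shows "ldist N m (LQ a) (lwit N m (LQ a) (LA)) + 1 = ldist N m (LQ a) (LA)"
  using assms
  by (auto simp: min_def)
lemma lwit_ok_QF:
  assumes "N \<ge> 2" "m \<ge> 1" "valid N m (LQ a)" "valid N m (LF)" "(LF) \<noteq> (LQ a)"
  shows "ldist N m (LQ a) (lwit N m (LQ a) (LF)) + 1 = ldist N m (LQ a) (LF)"
  using assms
  by (auto simp: min_def)
lemma lwit_QQ:
  assumes "1 \<le> a" "a \<le> m" "1 \<le> j" "j \<le> m" "j \<noteq> a"
  shows "ldist N m (LQ a) (lwit N m (LQ a) (LQ j)) + 1 = ldist N m (LQ a) (LQ j)"
proof -
  consider (c1) "a < j" | (c2) "j < a"
    using assms(5) by linarith
  then show ?thesis
  proof cases
    case c1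
    then obtain d where d: "j = a + d" "0 < d" using less_imp_add_positive by blast
    show ?thesis using d assms by (cases "d \<le> m + 2 - d"; cases "j = m") (auto simp: min_def)
  next
    case c2
    then obtain d where d: "a = j + d" "0 < d" using less_imp_add_positive by blast
    show ?thesis using d assms by (cases "d \<le> m + 2 - d"; cases "j = 1") (auto simp: min_def)
  qed
qed

lemma lwit_ok:
  assumes "N \<ge> 2" "m \<ge> 1" "valid N m s" "valid N m y" "y \<noteq> s"
  shows "ldist N m s (lwit N m s y) + 1 = ldist N m s y"
proof (cases s)
  case (LD a) then show ?thesis using lwit_ok_D assms by blast
next
  case (LE a) then show ?thesis using lwit_ok_E assms by blast
next
  case LA then show ?thesis using lwit_ok_A assms by blast
next
  case LF then show ?thesis using lwit_ok_F assms by blast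
next
  case (LQ a)
  show ?thesis
  proof (cases y)
    case (LD h) then show ?thesis using lwit_ok_QD assms LQ by blast
  next
    case (LE h) then show ?thesis using lwit_ok_QE assms LQ by blast
  next
    case LA then show ?thesis using lwit_ok_QA assms LQ by blast
  next
    case LF then show ?thesis using lwit_ok_QF assms LQ by blast
  next
    case (LQ j) then show ?thesis using lwit_QQ assms \<open>s = LQ a\<close> by auto
  qed
qed

definition ledge0 :: "nat \<Rightarrow> nat \<Rightarrow> lc \<Rightarrow> lc \<Rightarrow> bool" where
  "ledge0 N m p q \<longleftrightarrow> (\<exists>h<N. p = LD h \<and> q = LD (h+1)) \<or> (\<exists>h<N. p = LE h \<and> q = LE (h+1))
    \<or> (p = LD 0 \<and> q = LE 0) \<or> (p = LD 0 \<and> q = LQ 1) \<or> (p = LE 0 \<and> q = LQ m) \<or> (p = LE 0 \<and> q = LF)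
    \<or> (p = LD N \<and> q = LA) \<or> (p = LE N \<and> q = LA) \<or> (p = LD N \<and> q = LE N)
    \<or> (\<exists>j. 1 \<le> j \<and> j < m \<and> p = LQ j \<and> q = LQ (j+1))"

definition ledge :: "nat \<Rightarrow> nat \<Rightarrow> lc \<Rightarrow> lc \<Rightarrow> bool" where
  "ledge N m p q \<longleftrightarrow> ledge0 N m p q \<or> ledge0 N m q p"

lemma ledge0_lip:
  assumes "N \<ge> 2" "m \<ge> 1" "valid N m s" "ledge0 N m p q"
  shows "ldist N m s q \<le> ldist N m s p + 1 \<and> ldist N m s p \<le> ldist N m s q + 1"
  using assms(4) unfolding ledge0_def
  apply (elim disjE exE conjE)
  using llip0[OF assms(1-3)] llip1[OF assms(1-3)] llip2[OF assms(1-3)] llip3[OF assms(1-3)]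
     llip4[OF assms(1-3)] llip5[OF assms(1-3)] llip6[OF assms(1-3)] llip7[OF assms(1-3)]
     llip8[OF assms(1-3)] llip9[OF assms(1-3)]
  by auto

lemma ledge_lip:
  assumes "N \<ge> 2" "m \<ge> 1" "valid N m s" "ledge N m p q"
  shows "ldist N m s q \<le> ldist N m s p + 1"
  using assms ledge0_lip unfolding ledge_def by blast

lemma lwit_edge:
  assumes "N \<ge> 2" "m \<ge> 1" "valid N m s" "valid N m y" "y \<noteq> s"
  shows "ledge N m (lwit N m s y) y \<and> valid N m (lwit N m s y)"
  using assms by (cases s; cases y) (auto simp: ledge_def ledge0_def)

lemma ldist_refl: "ldist N m s s = 0"
  by (cases s) auto


lemma gauss2: "2 * (\<Sum>x<k. x) = k * (k - 1::nat)"
  by (induction k) (auto simp: algebra_simps)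

lemma gauss2': "2 * (\<Sum>x<k. x + 1) = k * (k + 1::nat)"
  by (induction k) (auto simp: algebra_simps)

lemma sum_split_add:
  fixes f :: "nat \<Rightarrow> 'a::comm_monoid_add"
  shows "(\<Sum>x<a + b. f x) = (\<Sum>x<a. f x) + (\<Sum>x<b. f (a + x))"
  by (induction b) (auto simp: add.assoc)

lemma sum_rev_lt:
  fixes f :: "nat \<Rightarrow> 'a::comm_monoid_add"
  shows "(\<Sum>x<k. f (k - 1 - x)) = (\<Sum>x<k. f x)"
  using sum.nat_diff_reindex[of f k] by (simp add: diff_diff_add)

lemma sum_Icc1:
  fixes f :: "nat \<Rightarrow> 'a::comm_monoid_add"
  shows "(\<Sum>j\<in>{1..m}. f j) = (\<Sum>x<m. f (x + 1))"
  by (induction m) (auto simp: atLeastAtMostSuc_conv add.commute)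

lemma sum_atMost:
  fixes f :: "nat \<Rightarrow> 'a::comm_monoid_add"
  shows "(\<Sum>h\<le>N. f h) = (\<Sum>x<N+1. f x)"
  by (simp add: lessThan_Suc_atMost[symmetric])

definition cm :: "nat \<Rightarrow> nat \<Rightarrow> nat \<Rightarrow> nat" where
  "cm L p q = min ((p - q) + (q - p)) (L - ((p - q) + (q - p)))"

lemma cycle0: "(\<Sum>q<2 * K. cm (2 * K) 0 q) = K * K"
proof -
  have "(\<Sum>q<2 * K. cm (2 * K) 0 q) = (\<Sum>q<K. cm (2 * K) 0 q) + (\<Sum>y<K. cm (2 * K) 0 (K + y))"
    using sum_split_add[of "\<lambda>q. cm (2 * K) 0 q" K K] by (simp add: mult_2)
  also have "(\<Sum>q<K. cm (2 * K) 0 q) = (\<Sum>q<K. q)"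
    by (rule sum.cong) (auto simp: cm_def)
  also have "(\<Sum>y<K. cm (2 * K) 0 (K + y)) = (\<Sum>y<K. K - y)"
    by (rule sum.cong) (auto simp: cm_def)
  also have "(\<Sum>y<K. K - y) = (\<Sum>y<K. (K - 1 - y) + 1)"
    by (rule sum.cong) auto
  also have "\<dots> = (\<Sum>y<K. y + 1)"
    using sum_rev_lt[of "\<lambda>y. y + 1" K] by simp
  finally have "2 * (\<Sum>q<2 * K. cm (2 * K) 0 q) = 2 * (\<Sum>q<K. q) + 2 * (\<Sum>y<K. y + 1)"
    by simp
  also have "\<dots> = K * (K - 1) + K * (K + 1)" by (simp only: gauss2 gauss2')
  also have "\<dots> = 2 * (K * K)" by (cases K) (auto simp: algebra_simps)
  finally show ?thesis by simp
qed

lemma cycle_shift: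
  assumes "Suc p < L"
  shows "(\<Sum>q<L. cm L (Suc p) q) = (\<Sum>q<L. cm L p q)"
proof -
  obtain L' where L: "L = Suc L'" using assms by (cases L) auto
  have "(\<Sum>q<L. cm L (Suc p) q) = cm L (Suc p) 0 + (\<Sum>q<L'. cm L (Suc p) (Suc q))"
    unfolding L by (rule sum.lessThan_Suc_shift)
  also have "(\<Sum>q<L'. cm L (Suc p) (Suc q)) = (\<Sum>q<L'. cm L p q)"
    by (rule sum.cong) (auto simp: cm_def)
  also have "cm L (Suc p) 0 = cm L p L'"
    using assms L by (auto simp: cm_def min_def)
  finally show ?thesis unfolding L by simp
qed

lemma cycle_const:
  assumes "p < 2 * K"
  shows "(\<Sum>q<2 * K. cm (2 * K) p q) = K * K"
  using assms
proof (induction p)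
  case 0 then show ?case using cycle0 by simp
next
  case (Suc p)
  then show ?case using cycle_shift[OF Suc.prems] by simp
qed


lemma sum_ends:
  fixes g :: "nat \<Rightarrow> 'a::comm_monoid_add"
  shows "(\<Sum>q<k + 2. g q) = g 0 + (\<Sum>x<k. g (x + 1)) + g (k + 1)"
proof -
  have "(\<Sum>q<k + 2. g q) = (\<Sum>q<Suc (Suc k). g q)" by simp
  also have "\<dots> = g 0 + (\<Sum>q<Suc k. g (Suc q))" by (rule sum.lessThan_Suc_shift)
  also have "(\<Sum>q<Suc k. g (Suc q)) = (\<Sum>x<k. g (x + 1)) + g (k + 1)" by simp
  finally show ?thesis by (simp add: add.assoc)
qed

lemma tent_half:
  fixes t :: nat
  shows "(\<Sum>x<2 * t. min (x + 1) (2 * t - x)) = t * (t + 1)"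
proof -
  have "(\<Sum>x<2 * t. min (x + 1) (2 * t - x)) = (\<Sum>x<t. min (x + 1) (2 * t - x)) + (\<Sum>y<t. min (t + y + 1) (2 * t - (t + y)))"
    using sum_split_add[of "\<lambda>x. min (x + 1) (2 * t - x)" t t] by (simp add: mult_2 add.assoc)
  also have "(\<Sum>x<t. min (x + 1) (2 * t - x)) = (\<Sum>x<t. x + 1)"
    by (rule sum.cong) auto
  also have "(\<Sum>y<t. min (t + y + 1) (2 * t - (t + y))) = (\<Sum>y<t. (t - 1 - y) + 1)"
    by (rule sum.cong) auto
  also have "\<dots> = (\<Sum>y<t. y + 1)"
    using sum_rev_lt[of "\<lambda>y. y + 1" t] by simp
  finally have "2 * (\<Sum>x<2 * t. min (x + 1) (2 * t - x)) = 2 * (\<Sum>x<t. x + 1) + 2 * (\<Sum>x<t. x + 1)"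
    by simp
  also have "\<dots> = 2 * (t * (t + 1))" by (simp only: gauss2')
  finally show ?thesis by simp
qed



lemma memV[simp]:
  "VA \<in> G4_verts n m" "VB \<in> G4_verts n m" "VC \<in> G4_verts n m"
  "VD \<in> G4_verts n m" "VE \<in> G4_verts n m" "VF \<in> G4_verts n m"
  "P1 i \<in> G4_verts n m \<longleftrightarrow> 1 \<le> i \<and> i \<le> n"
  "P2 i \<in> G4_verts n m \<longleftrightarrow> 1 \<le> i \<and> i \<le> n"
  "P3 i \<in> G4_verts n m \<longleftrightarrow> 1 \<le> i \<and> i \<le> m"
  by (auto simp: G4_verts_def)

fun unloc :: "nat \<Rightarrow> lc \<Rightarrow> vtx" where
  "unloc n (LD h) = (if h = 0 then VD else if h = n + 1 then VB else P1 (n + 1 - h))"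
| "unloc n (LE h) = (if h = 0 then VE else if h = n + 1 then VC else P2 (n + 1 - h))"
| "unloc n (LQ j) = P3 j" | "unloc n LA = VA" | "unloc n LF = VF"

lemma loc_valid: "v \<in> G4_verts n m \<Longrightarrow> valid (n+1) m (loc n v)"
  by (cases v) auto

lemma unloc_loc: "v \<in> G4_verts n m \<Longrightarrow> unloc n (loc n v) = v"
  by (cases v) auto

lemma unloc_valid: "valid (n+1) m y \<Longrightarrow> unloc n y \<in> G4_verts n m \<and> loc n (unloc n y) = y"
  by (cases y) auto

lemma adj_ledge:
  assumes "n \<ge> 1" "x \<in> G4_verts n m" "y \<in> G4_verts n m" "G4_adj n m x y"
  shows "ledge (n+1) m (loc n x) (loc n y)"
  using assms unfolding G4_adj_def G4_dir_edge_def path_edge_def ledge_def ledge0_def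
  by (elim disjE exE conjE; simp; (elim disjE exE conjE)?; auto)

lemma ledge_adj:
  assumes "n \<ge> 1" "m \<ge> 1" "valid (n+1) m p" "valid (n+1) m q" "ledge (n+1) m p q"
  shows "G4_adj n m (unloc n p) (unloc n q)"
  using assms unfolding G4_adj_def G4_dir_edge_def path_edge_def ledge_def ledge0_def
  by (elim disjE exE conjE) auto


lemma gdist_eq:
  assumes "n \<ge> 1" "m \<ge> 1" "u \<in> G4_verts n m" "v \<in> G4_verts n m"
  shows "gdist (G4_verts n m) (G4_adj n m) u v = ldist (n+1) m (loc n u) (loc n v)"
proof (rule gdist_char[where D = "\<lambda>v. ldist (n+1) m (loc n u) (loc n v)"])
  have N2: "n + 1 \<ge> 2" using assms by simp
  have su: "valid (n+1) m (loc n u)" using loc_valid assms by blast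
  show "u \<in> G4_verts n m" "v \<in> G4_verts n m" by fact+
  show "ldist (n+1) m (loc n u) (loc n u) = 0" by (rule ldist_refl)
  show "ldist (n+1) m (loc n u) (loc n y) \<le> ldist (n+1) m (loc n u) (loc n x) + 1"
    if "x \<in> G4_verts n m" "y \<in> G4_verts n m" "G4_adj n m x y" for x y
    using ledge_lip[OF N2 assms(2) su adj_ledge[OF assms(1) that]] .
  show "\<exists>w\<in>G4_verts n m. G4_adj n m w y \<and> ldist (n+1) m (loc n u) (loc n w) + 1 = ldist (n+1) m (loc n u) (loc n y)"
    if "y \<in> G4_verts n m" "y \<noteq> u" for y
  proof -
    have sy: "valid (n+1) m (loc n y)" using loc_valid that by blast
    have ne: "loc n y \<noteq> loc n u" using unloc_loc that assms(3) by metis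
    define z where "z = lwit (n+1) m (loc n u) (loc n y)"
    have z: "ledge (n+1) m z (loc n y)" "valid (n+1) m z"
      using lwit_edge[OF N2 assms(2) su sy ne] unfolding z_def by auto
    have zd: "ldist (n+1) m (loc n u) z + 1 = ldist (n+1) m (loc n u) (loc n y)"
      using lwit_ok[OF N2 assms(2) su sy ne] unfolding z_def .
    have "G4_adj n m (unloc n z) (unloc n (loc n y))"
      using ledge_adj[OF assms(1,2) z(2) sy z(1)] .
    then have "G4_adj n m (unloc n z) y" using unloc_loc that(1) by metis
    moreover have "unloc n z \<in> G4_verts n m" "loc n (unloc n z) = z" using unloc_valid z(2) by auto
    ultimately show ?thesis using zd by metis
  qed
qed


lemma sum_V:
  fixes g :: "vtx \<Rightarrow> nat"
  shows "(\<Sum>v\<in>G4_verts n m. g v) = g VA + g VB + g VC + g VD + g VE + g VF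
     + (\<Sum>i\<in>{1..n}. g (P1 i)) + (\<Sum>i\<in>{1..n}. g (P2 i)) + (\<Sum>j\<in>{1..m}. g (P3 j))"
proof -
  have V: "G4_verts n m = {VA, VB, VC, VD, VE, VF} \<union> (P1 ` {1..n} \<union> (P2 ` {1..n} \<union> P3 ` {1..m}))"
    unfolding G4_verts_def by auto
  have "(\<Sum>v\<in>G4_verts n m. g v) = (\<Sum>v\<in>{VA, VB, VC, VD, VE, VF}. g v) + ((\<Sum>v\<in>P1 ` {1..n}. g v)
     + ((\<Sum>v\<in>P2 ` {1..n}. g v) + (\<Sum>v\<in>P3 ` {1..m}. g v)))"
    unfolding V by (subst sum.union_disjoint; (subst sum.union_disjoint)?; (subst sum.union_disjoint)?; auto)
  also have "(\<Sum>v\<in>P1 ` {1..n}. g v) = (\<Sum>i\<in>{1..n}. g (P1 i))"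
    by (rule sum.reindex_cong[where l = P1]) (auto simp: inj_on_def)
  also have "(\<Sum>v\<in>P2 ` {1..n}. g v) = (\<Sum>i\<in>{1..n}. g (P2 i))"
    by (rule sum.reindex_cong[where l = P2]) (auto simp: inj_on_def)
  also have "(\<Sum>v\<in>P3 ` {1..m}. g v) = (\<Sum>i\<in>{1..m}. g (P3 i))"
    by (rule sum.reindex_cong[where l = P3]) (auto simp: inj_on_def)
  finally show ?thesis by (simp add: add.assoc)
qed

lemma side_sum:
  fixes F :: "nat \<Rightarrow> nat"
  shows "F (n + 1) + F 0 + (\<Sum>i\<in>{1..n}. F (n + 1 - i)) = (\<Sum>h<n + 2. F h)"
proof -
  have "(\<Sum>i\<in>{1..n}. F (n + 1 - i)) = (\<Sum>x<n. F (n - x))"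
    by (subst sum_Icc1) simp
  also have "\<dots> = (\<Sum>x<n. F ((n - 1 - x) + 1))"
    by (rule sum.cong) (auto simp: Suc_diff_Suc)
  also have "\<dots> = (\<Sum>x<n. F (x + 1))"
    using sum_rev_lt[of "\<lambda>x. F (x + 1)" n] by simp
  finally show ?thesis using sum_ends[of F n] by simp
qed

definition LT :: "nat \<Rightarrow> nat \<Rightarrow> lc \<Rightarrow> nat" where
  "LT N m s = ldist N m s LA + ldist N m s LF + (\<Sum>h<N + 1. ldist N m s (LD h))
     + (\<Sum>h<N + 1. ldist N m s (LE h)) + (\<Sum>x<m. ldist N m s (LQ (x + 1)))"

lemma trans_LT:
  assumes "n \<ge> 1" "m \<ge> 1" "u \<in> G4_verts n m"
  shows "transmission (G4_verts n m) (G4_adj n m) u = LT (n + 1) m (loc n u)"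
proof -
  define f where "f = ldist (n + 1) m (loc n u)"
  have "transmission (G4_verts n m) (G4_adj n m) u = (\<Sum>v\<in>G4_verts n m. f (loc n v))"
    unfolding transmission_def f_def by (rule sum.cong) (use gdist_eq assms in auto)
  also have "\<dots> = f LA + f LF + (f (LD (n + 1)) + f (LD 0) + (\<Sum>i\<in>{1..n}. f (LD (n + 1 - i))))
     + (f (LE (n + 1)) + f (LE 0) + (\<Sum>i\<in>{1..n}. f (LE (n + 1 - i)))) + (\<Sum>x<m. f (LQ (x + 1)))"
    unfolding sum_V loc.simps sum_Icc1[of "\<lambda>j. f (LQ j)" m] by simp
  also have "\<dots> = LT (n + 1) m (loc n u)"
    unfolding LT_def f_def
    using side_sum[of "\<lambda>h. ldist (n + 1) m (loc n u) (LD h)" n]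
          side_sum[of "\<lambda>h. ldist (n + 1) m (loc n u) (LE h)" n]
    by (simp add: add.assoc)
  finally show ?thesis .
qed



lemma sum_const_add: "(\<Sum>x<m. (c::nat) + g x) = m * c + (\<Sum>x<m. g x)"
  by (induction m) auto

lemma cyc_mid:
  assumes "p < 2 * K" "K \<ge> 1"
  shows "(\<Sum>x<2 * K - 2. cm (2 * K) p (x + 1)) + cm (2 * K) p 0 + cm (2 * K) p (2 * K - 1) = K * K"
proof -
  define k where "k = 2 * K - 2"
  define g where "g = cm (2 * K) p"
  have e: "2 * K = k + 2" "2 * K - 1 = k + 1" using assms unfolding k_def by linarith+
  have c: "(\<Sum>q<2 * K. g q) = K * K" unfolding g_def using cycle_const[OF assms(1)] .
  have "(\<Sum>q<2 * K. g q) = g 0 + (\<Sum>x<k. g (x + 1)) + g (k + 1)"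
    unfolding e(1) by (rule sum_ends)
  then have "(\<Sum>x<k. g (x + 1)) + g 0 + g (k + 1) = K * K" using c by linarith
  then show ?thesis unfolding g_def k_def[symmetric] e(2) .
qed

lemma cyc_DE:
  assumes "h0 \<le> N"
  shows "(\<Sum>h<N + 1. ldist N m (LD h0) (LD h)) + (\<Sum>h<N + 1. ldist N m (LD h0) (LE h)) = (N + 1) * (N + 1)"
proof -
  define L where "L = 2 * (N + 1)"
  have c: "(\<Sum>q<L. cm L (N - h0) q) = (N + 1) * (N + 1)"
    unfolding L_def by (rule cycle_const) (use assms in simp)
  have "(\<Sum>q<L. cm L (N - h0) q) = (\<Sum>q<N + 1. cm L (N - h0) q) + (\<Sum>y<N + 1. cm L (N - h0) (N + 1 + y))"
    unfolding L_def using sum_split_add[of "cm (2 * (N + 1)) (N - h0)" "N + 1" "N + 1"] by (simp add: mult_2)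
  also have "(\<Sum>q<N + 1. cm L (N - h0) q) = (\<Sum>x<N + 1. cm L (N - h0) (N - x))"
    using sum_rev_lt[of "cm L (N - h0)" "N + 1"] by simp
  also have "\<dots> = (\<Sum>h<N + 1. ldist N m (LD h0) (LD h))"
    by (rule sum.cong) (use assms in \<open>auto simp: cm_def L_def min_def\<close>)
  also have "(\<Sum>y<N + 1. cm L (N - h0) (N + 1 + y)) = (\<Sum>h<N + 1. ldist N m (LD h0) (LE h))"
    by (rule sum.cong) (use assms in \<open>auto simp: cm_def L_def min_def\<close>)
  finally show ?thesis using c by simp
qed

lemma SQD:
  assumes "m = 2 * t" "t \<ge> 1"
  shows "(\<Sum>x<m. ldist N m (LD h0) (LQ (x + 1))) = m * h0 + (t * t + 2 * t)"
proof -
  have "(\<Sum>x<m. ldist N m (LD h0) (LQ (x + 1))) = (\<Sum>x<m. h0 + cm (m + 2) 0 (x + 1))"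
    by (rule sum.cong) (auto simp: cm_def)
  also have "\<dots> = m * h0 + (\<Sum>x<m. cm (m + 2) 0 (x + 1))" by (rule sum_const_add)
  also have "(\<Sum>x<m. cm (m + 2) 0 (x + 1)) = t * t + 2 * t"
    using cyc_mid[of 0 "t + 1"] assms by (simp add: cm_def algebra_simps)
  finally show ?thesis .
qed

lemma SQE:
  assumes "m = 2 * t" "t \<ge> 1"
  shows "(\<Sum>x<m. ldist N m (LE h0) (LQ (x + 1))) = m * h0 + (t * t + 2 * t)"
proof -
  have "(\<Sum>x<m. ldist N m (LE h0) (LQ (x + 1))) = (\<Sum>x<m. h0 + cm (m + 2) (m + 1) (x + 1))"
    by (rule sum.cong) (auto simp: cm_def min_def)
  also have "\<dots> = m * h0 + (\<Sum>x<m. cm (m + 2) (m + 1) (x + 1))" by (rule sum_const_add)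
  also have "(\<Sum>x<m. cm (m + 2) (m + 1) (x + 1)) = t * t + 2 * t"
    using cyc_mid[of "m + 1" "t + 1"] assms by (simp add: cm_def algebra_simps)
  finally show ?thesis .
qed

lemma SQF:
  assumes "m = 2 * t" "t \<ge> 1"
  shows "(\<Sum>x<m. ldist N m LF (LQ (x + 1))) = m + (t * t + 2 * t)"
proof -
  have "(\<Sum>x<m. ldist N m LF (LQ (x + 1))) = (\<Sum>x<m. 1 + cm (m + 2) (m + 1) (x + 1))"
    by (rule sum.cong) (auto simp: cm_def min_def)
  also have "\<dots> = m + (\<Sum>x<m. cm (m + 2) (m + 1) (x + 1))" using sum_const_add[where c=1 and m=m] by simp
  also have "(\<Sum>x<m. cm (m + 2) (m + 1) (x + 1)) = t * t + 2 * t"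
    using cyc_mid[of "m + 1" "t + 1"] assms by (simp add: cm_def algebra_simps)
  finally show ?thesis .
qed

lemma SQA:
  assumes "m = 2 * t"
  shows "(\<Sum>x<m. ldist N m LA (LQ (x + 1))) = m * (N + 1) + t * (t + 1)"
proof -
  have "(\<Sum>x<m. ldist N m LA (LQ (x + 1))) = (\<Sum>x<m. (N + 1) + min (x + 1) (2 * t - x))"
    by (rule sum.cong) (auto simp: assms simp del: add_Suc_right add_Suc)
  also have "\<dots> = m * (N + 1) + (\<Sum>x<m. min (x + 1) (2 * t - x))" by (rule sum_const_add)
  also have "(\<Sum>x<m. min (x + 1) (2 * t - x)) = t * (t + 1)"
    using tent_half[of t] assms by simp
  finally show ?thesis .
qed

lemma SQQ:
  assumes "m = 2 * t" "t \<ge> 1" "1 \<le> j" "j \<le> m"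
  shows "(\<Sum>x<m. ldist N m (LQ j) (LQ (x + 1))) + min j (m + 2 - j) + min (j + 1) (m + 1 - j) = (t + 1) * (t + 1)"
proof -
  have "(\<Sum>x<m. ldist N m (LQ j) (LQ (x + 1))) = (\<Sum>x<m. cm (m + 2) j (x + 1))"
    by (rule sum.cong) (auto simp: cm_def)
  moreover have "cm (m + 2) j 0 = min j (m + 2 - j)" "cm (m + 2) j (m + 1) = min (j + 1) (m + 1 - j)"
    using assms by (auto simp: cm_def min_def)
  ultimately show ?thesis
    using cyc_mid[of j "t + 1"] assms by (simp add: algebra_simps)
qed


definition D0 :: "nat \<Rightarrow> nat \<Rightarrow> nat" where
  "D0 N t = (N + 1) * (N + 1) + t * t + 2 * t + N + 3"

lemma sumh: "2 * (\<Sum>h<N + 1. h) = (N + 1) * (N::nat)"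
  using gauss2[of "N + 1"] by simp

lemma LT_D:
  assumes "m = 2 * t" "t \<ge> 1" "h0 \<le> N"
  shows "LT N m (LD h0) = D0 N t + m * h0"
proof -
  have a: "ldist N m (LD h0) LA + ldist N m (LD h0) LF = N + 3" using assms by simp
  show ?thesis unfolding LT_def
    using a cyc_DE[OF assms(3), of m] SQD[OF assms(1,2), of N h0]
    by (simp add: D0_def algebra_simps)
qed

lemma LT_E:
  assumes "m = 2 * t" "t \<ge> 1" "h0 \<le> N"
  shows "LT N m (LE h0) + 1 = D0 N t + m * h0"
proof -
  have a: "ldist N m (LE h0) LA + ldist N m (LE h0) LF = N + 2" using assms by simp
  have b: "(\<Sum>h<N + 1. ldist N m (LE h0) (LD h)) = (\<Sum>h<N + 1. ldist N m (LD h0) (LE h))"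
    by (rule sum.cong) auto
  have c: "(\<Sum>h<N + 1. ldist N m (LE h0) (LE h)) = (\<Sum>h<N + 1. ldist N m (LD h0) (LD h))"
    by (rule sum.cong) auto
  show ?thesis unfolding LT_def
    using a b c cyc_DE[OF assms(3), of m] SQE[OF assms(1,2), of N h0]
    by (simp add: D0_def algebra_simps)
qed

lemma LT_Q_sides:
  "(\<Sum>h<N + 1. ldist N m (LQ j) (LD h)) + (\<Sum>h<N + 1. ldist N m (LQ j) (LE h))
     = (N + 1) * N + (N + 1) * (min j (m + 2 - j) + min (j + 1) (m + 1 - j))"
proof -
  have "(\<Sum>h<N + 1. ldist N m (LQ j) (LD h)) = (\<Sum>h<N + 1. h) + (N + 1) * min j (m + 2 - j)"
    by (simp add: sum.distrib)
  moreover have "(\<Sum>h<N + 1. ldist N m (LQ j) (LE h)) = (\<Sum>h<N + 1. h) + (N + 1) * min (j + 1) (m + 1 - j)"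
    by (simp add: sum.distrib)
  ultimately show ?thesis using sumh[of N] by (simp add: algebra_simps)
qed

lemma LT_Q1:
  assumes "m = 2 * t" "t \<ge> 1" "1 \<le> j" "j \<le> t"
  shows "LT N m (LQ j) = D0 N t + (2 * N + 2) * j"
proof -
  have m1: "min j (m + 2 - j) = j" "min (j + 1) (m + 1 - j) = j + 1" "min j (m + 1 - j) = j"
    using assms by auto
  have a: "ldist N m (LQ j) LA + ldist N m (LQ j) LF = N + 1 + j + 1 + (j + 1)"
    using m1 by simp
  have q: "(\<Sum>x<m. ldist N m (LQ j) (LQ (x + 1))) + j + (j + 1) = (t + 1) * (t + 1)"
    using SQQ[OF assms(1,2,3), of N] m1 assms by simp
  show ?thesis unfolding LT_def
    using a q LT_Q_sides[of N m j] m1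
    by (simp add: D0_def algebra_simps)
qed

lemma LT_Q2:
  assumes "m = 2 * t" "t \<ge> 1" "t < j" "j \<le> m"
  shows "LT N m (LQ j) + 1 = D0 N t + (2 * N + 2) * (m + 1 - j)"
proof -
  define k where "k = m + 1 - j"
  have jk: "j = m + 1 - k" "1 \<le> k" "k \<le> t" using assms unfolding k_def by auto
  have m1: "min j (m + 2 - j) = k + 1" "min (j + 1) (m + 1 - j) = k" "min j (m + 1 - j) = k"
    using assms unfolding k_def by auto
  have a: "ldist N m (LQ j) LA + ldist N m (LQ j) LF = N + 1 + k + 1 + k"
    using m1 by simp
  have q: "(\<Sum>x<m. ldist N m (LQ j) (LQ (x + 1))) + (k + 1) + k = (t + 1) * (t + 1)"
    using SQQ[OF assms(1,2), of j N] m1 assms by simp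
  show ?thesis unfolding LT_def k_def[symmetric]
    using a q LT_Q_sides[of N m j] m1
    by (simp add: D0_def algebra_simps)
qed

lemma LT_A:
  assumes "m = 2 * t" "t \<ge> 1"
  shows "LT N m LA = D0 N t + N + t + 2 * t * N"
proof -
  have s: "(\<Sum>h<N + 1. ldist N m LA (LD h)) = (\<Sum>h<N + 1. h + 1)"
  proof -
    have "(\<Sum>h<N + 1. ldist N m LA (LD h)) = (\<Sum>h<N + 1. (N + 1 - 1 - h) + 1)"
      by (rule sum.cong) auto
    also have "\<dots> = (\<Sum>h<N + 1. h + 1)" by (rule sum_rev_lt)
    finally show ?thesis .
  qed
  have s2: "(\<Sum>h<N + 1. ldist N m LA (LE h)) = (\<Sum>h<N + 1. ldist N m LA (LD h))"
    by (rule sum.cong) auto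
  have g: "2 * (\<Sum>h<N + 1. h + 1) = (N + 1) * (N + 2)" using gauss2'[of "N + 1"] by simp
  show ?thesis unfolding LT_def
    using s s2 g SQA[OF assms(1), of N] assms(1)
    by (simp add: D0_def algebra_simps)
qed

lemma LT_F:
  assumes "m = 2 * t" "t \<ge> 1"
  shows "LT N m LF = D0 N t + 2 * N + 1 + 2 * t"
proof -
  have s: "(\<Sum>h<N + 1. ldist N m LF (LD h)) = (\<Sum>h<N + 1. h) + (N + 1) * 2"
    using sum_const_add[where c=2 and g="\<lambda>h. h" and m="N+1"] by simp
  have s2: "(\<Sum>h<N + 1. ldist N m LF (LE h)) = (\<Sum>h<N + 1. h) + (N + 1)"
    using sum_const_add[where c=1 and g="\<lambda>h. h" and m="N+1"] by simp
  show ?thesis unfolding LT_def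
    using s s2 sumh[of N] SQF[OF assms(1,2), of N] assms(1)
    by (simp add: D0_def algebra_simps)
qed



fun par :: "nat \<Rightarrow> lc \<Rightarrow> nat" where
  "par t (LD h) = 0" | "par t (LE h) = 1" | "par t (LQ j) = (if j \<le> t then 0 else 1)"
| "par t LA = 0" | "par t LF = 1"

fun wv :: "nat \<Rightarrow> nat \<Rightarrow> nat \<Rightarrow> lc \<Rightarrow> nat" where
  "wv N m t (LD h) = m * h" | "wv N m t (LE h) = m * h"
| "wv N m t (LQ j) = (2 * N + 2) * (if j \<le> t then j else m + 1 - j)"
| "wv N m t LA = N + t + 2 * t * N" | "wv N m t LF = 2 * N + 2 + 2 * t"

lemma LT_w:
  assumes "m = 2 * t" "t \<ge> 1" "valid N m x"
  shows "LT N m x + par t x = D0 N t + wv N m t x"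
proof (cases x)
  case (LD h) then show ?thesis using LT_D[OF assms(1,2), of h N] assms by simp
next
  case (LE h) then show ?thesis using LT_E[OF assms(1,2), of h N] assms by simp
next
  case (LQ j)
  show ?thesis
  proof (cases "j \<le> t")
    case True then show ?thesis using LT_Q1[OF assms(1,2), of j N] assms LQ by simp
  next
    case False then show ?thesis using LT_Q2[OF assms(1,2), of j N] assms LQ by simp
  qed
next
  case LA then show ?thesis using LT_A[OF assms(1,2), of N] by simp
next
  case LF then show ?thesis using LT_F[OF assms(1,2), of N] by simp
qed

lemma wv_even:
  assumes "m = 2 * t" "even N" "even t"
  shows "even (wv N m t x)"
  using assms by (cases x) auto

lemma par01: "par t x = 0 \<or> par t x = 1"
  by (cases x) auto

lemma nt1:
  fixes N t h j a :: nat
  assumes "t = 2 ^ a" "odd (N + 1)" "t * h = (N + 1) * j" "1 \<le> j" "j \<le> t" "h \<le> N"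
  shows False
proof -
  have cp: "coprime t (N + 1)" using assms(1,2) by simp
  have "t dvd (N + 1) * j" using assms(3) by (metis dvd_triv_left)
  then have "t dvd j" using cp coprime_dvd_mult_right_iff by blast
  then have "j = t" using assms(4,5) by (meson dvd_imp_le le_antisym less_le_trans zero_less_one)
  then have "h = N + 1" using assms(3,5) by (metis mult.commute assms(4) le_trans mult_cancel_left1 mult_le_cancel2 nat_mult_eq_cancel1 not_one_le_zero zero_less_iff_neq_zero)
  then show False using assms(6) by simp
qed

lemma nt4:
  fixes N t a :: nat
  assumes "t = 2 ^ a" "odd (N + 1)" "(N + 1) dvd t" "N \<ge> 2"
  shows False
proof -
  have cp: "coprime (N + 1) t" using assms(1,2) by (simp add: coprime_commute)
  then have "is_unit (N + 1)" using coprime_common_divisor[OF cp dvd_refl assms(3)] by simp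
  then show False using assms(4) by simp
qed


lemma k_DQ:
  fixes N t h j a m :: nat
  assumes "t = 2 ^ a" "odd (N + 1)" "m = 2 * t" "h \<le> N" "1 \<le> j" "j \<le> t" "m * h = (2 * N + 2) * j"
  shows False
proof -
  have "t * h = (N + 1) * j" using assms(3,7) by (simp add: algebra_simps)
  then show False using nt1[OF assms(1,2) _ assms(5,6,4)] by blast
qed

lemma k_DA:
  fixes N t h m :: nat
  assumes "t \<ge> 1" "h \<le> N" "m = 2 * t" "m * h = N + t + 2 * t * N"
  shows False
proof -
  have "t * h \<le> t * N" using assms(2) by simp
  moreover have "m * h = 2 * (t * h)" using assms(3) by simp
  ultimately show False using assms(1,4) by linarith
qed

lemma k_QA:
  fixes N t j m :: nat
  assumes "\<not> (N + 1) dvd (m + 2)" "m = 2 * t" "(2 * N + 2) * j = N + t + 2 * t * N"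
  shows False
proof -
  have "(N + 1) * (2 * t + 1) = (N + 1) * (2 * j) + (t + 1)" using assms(3) by (simp add: algebra_simps)
  then have d1: "(N + 1) dvd ((N + 1) * (2 * j) + (t + 1))" by (metis dvd_triv_left)
  have d2: "(N + 1) dvd ((N + 1) * (2 * j))" by (rule dvd_triv_left)
  have d3: "(N + 1) dvd (t + 1)" using dvd_add_right_iff[OF d2] d1 by blast
  have "m + 2 = (t + 1) * 2" using assms(2) by simp
  then have "(N + 1) dvd (m + 2)" using d3 by (metis dvd_mult2)
  then show False using assms(1) by blast
qed

lemma k_EQ:
  fixes N t h j a m :: nat
  assumes "t = 2 ^ a" "odd (N + 1)" "m = 2 * t" "h \<le> N" "t < j" "j \<le> m" "m * h = (2 * N + 2) * (m + 1 - j)"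
  shows False
proof -
  have "1 \<le> m + 1 - j" "m + 1 - j \<le> t" using assms(3,5,6) by auto
  then show False using k_DQ[OF assms(1-4)] assms(7) by blast
qed

lemma k_EF:
  fixes N t h m :: nat
  assumes "even t" "odd (N + 1)" "m = 2 * t" "m * h = 2 * N + 2 + 2 * t"
  shows False
proof -
  have "t * h = (N + 1) + t" using assms(3,4) by simp
  moreover have "even (t * h)" using assms(1) by simp
  ultimately show False using assms(1,2) by simp
qed

lemma k_QF:
  fixes N t j a m :: nat
  assumes "t = 2 ^ a" "odd (N + 1)" "N \<ge> 2" "m = 2 * t" "t < j" "j \<le> m"
     "(2 * N + 2) * (m + 1 - j) = 2 * N + 2 + 2 * t"
  shows False
proof -
  define k where "k = m + 1 - j"
  have k1: "(2 * N + 2) * k = 2 * N + 2 + 2 * t" using assms(7) unfolding k_def .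
  have "2 * ((N + 1) * k) = 2 * ((N + 1) + t)" using k1 by (simp add: algebra_simps)
  then have "(N + 1) * k = (N + 1) + t" by simp
  then have d1: "(N + 1) dvd ((N + 1) + t)" by (metis dvd_triv_left)
  have d2: "(N + 1) dvd (N + 1)" by (rule dvd_refl)
  have "(N + 1) dvd t" using dvd_add_right_iff[OF d2] d1 by blast
  then show False using nt4[OF assms(1,2) _ assms(3)] by blast
qed

lemma wv_inj:
  assumes m: "m = 2 * t" and ta: "t = 2 ^ a" "a \<ge> 1" and N: "N \<ge> 2" "even N"
    and nd: "\<not> (N + 1) dvd (m + 2)"
    and vx: "valid N m x" and vy: "valid N m y"
    and p: "par t x = par t y" and w: "wv N m t x = wv N m t y"
  shows "x = y"
proof -
  have t1: "t \<ge> 1" using ta by simp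
  have te: "even t" using ta by simp
  have o: "odd (N + 1)" using N by simp
  consider (D) h where "x = LD h" | (E) h where "x = LE h" | (Q1) j where "x = LQ j" "j \<le> t"
     | (Q2) j where "x = LQ j" "t < j" | (A) "x = LA" | (F) "x = LF"
    by (cases x) (blast, blast, metis not_le, blast, blast)
  then show ?thesis
  proof cases
    case (D h)
    note X = this
    consider (D) h' where "y = LD h'" | (E) h' where "y = LE h'" | (Q1) j' where "y = LQ j'" "j' \<le> t"
       | (Q2) j' where "y = LQ j'" "t < j'" | (A) "y = LA" | (F) "y = LF"
      by (cases y) (blast, blast, metis not_le, blast, blast)
    then show ?thesis
    proof cases
      case (D h')
      note Y = this
      have e: "m * h = m * h'" using w X Y by simp
      show ?thesis using e m t1 X Y by simp
    next
      case (E h')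
      note Y = this
      then show ?thesis using p X by simp
    next
      case (Q1 j')
      note Y = this
      have e: "m * h = (2 * N + 2) * j'" using w X Y by simp
      show ?thesis using k_DQ[OF ta(1) o m] e vx vy X Y by (simp; metis)
    next
      case (Q2 j')
      note Y = this
      then show ?thesis using p X by simp
    next
      case A
      note Y = this
      have e: "m * h = N + t + 2 * t * N" using w X Y by simp
      show ?thesis using k_DA[OF t1 _ m] e vx vy X Y by (simp; metis)
    next
      case F
      note Y = this
      then show ?thesis using p X by simp
    qed
  next
    case (E h)
    note X = this
    consider (D) h' where "y = LD h'" | (E) h' where "y = LE h'" | (Q1) j' where "y = LQ j'" "j' \<le> t"
       | (Q2) j' where "y = LQ j'" "t < j'" | (A) "y = LA" | (F) "y = LF"
      by (cases y) (blast, blast, metis not_le, blast, blast)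
    then show ?thesis
    proof cases
      case (D h')
      note Y = this
      then show ?thesis using p X by simp
    next
      case (E h')
      note Y = this
      have e: "m * h = m * h'" using w X Y by simp
      show ?thesis using e m t1 X Y by simp
    next
      case (Q1 j')
      note Y = this
      then show ?thesis using p X by simp
    next
      case (Q2 j')
      note Y = this
      have e: "m * h = (2 * N + 2) * (m + 1 - j')" using w X Y by simp
      show ?thesis using k_EQ[OF ta(1) o m] e vx vy X Y by (simp; metis)
    next
      case A
      note Y = this
      then show ?thesis using p X by simp
    next
      case F
      note Y = this
      have e: "m * h = 2 * N + 2 + 2 * t" using w X Y by simp
      show ?thesis using k_EF[OF te o m] e X Y by (simp; metis)
    qed
  next
    case (Q1 j)
    note X = this
    consider (D) h' where "y = LD h'" | (E) h' where "y = LE h'" | (Q1) j' where "y = LQ j'" "j' \<le> t"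
       | (Q2) j' where "y = LQ j'" "t < j'" | (A) "y = LA" | (F) "y = LF"
      by (cases y) (blast, blast, metis not_le, blast, blast)
    then show ?thesis
    proof cases
      case (D h')
      note Y = this
      have e: "(2 * N + 2) * j = m * h'" using w X Y by simp
      show ?thesis using k_DQ[OF ta(1) o m] e vx vy X Y by (simp; metis)
    next
      case (E h')
      note Y = this
      then show ?thesis using p X by simp
    next
      case (Q1 j')
      note Y = this
      have e: "(2 * N + 2) * j = (2 * N + 2) * j'" using w X Y by simp
      show ?thesis using e mult_cancel1[of "2 * N + 2" j j'] X Y by simp
    next
      case (Q2 j')
      note Y = this
      then show ?thesis using p X by simp
    next
      case A
      note Y = this
      have e: "(2 * N + 2) * j = N + t + 2 * t * N" using w X Y by simp
      show ?thesis using k_QA[OF nd m] e X Y by (simp; metis)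
    next
      case F
      note Y = this
      then show ?thesis using p X by simp
    qed
  next
    case (Q2 j)
    note X = this
    consider (D) h' where "y = LD h'" | (E) h' where "y = LE h'" | (Q1) j' where "y = LQ j'" "j' \<le> t"
       | (Q2) j' where "y = LQ j'" "t < j'" | (A) "y = LA" | (F) "y = LF"
      by (cases y) (blast, blast, metis not_le, blast, blast)
    then show ?thesis
    proof cases
      case (D h')
      note Y = this
      then show ?thesis using p X by simp
    next
      case (E h')
      note Y = this
      have e: "(2 * N + 2) * (m + 1 - j) = m * h'" using w X Y by simp
      show ?thesis using k_EQ[OF ta(1) o m] e vx vy X Y by (simp; metis)
    next
      case (Q1 j')
      note Y = this
      then show ?thesis using p X by simp
    next
      case (Q2 j')
      note Y = this
      have e: "(2 * N + 2) * (m + 1 - j) = (2 * N + 2) * (m + 1 - j')" using w X Y by simp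
      have "m + 1 - j = m + 1 - j'" using e mult_cancel1[of "2 * N + 2" "m + 1 - j" "m + 1 - j'"] by simp
      then show ?thesis using vx vy X Y by simp
    next
      case A
      note Y = this
      then show ?thesis using p X by simp
    next
      case F
      note Y = this
      have e: "(2 * N + 2) * (m + 1 - j) = 2 * N + 2 + 2 * t" using w X Y by simp
      show ?thesis using k_QF[OF ta(1) o N(1) m] e vx vy X Y by (simp; metis)
    qed
  next
    case A
    note X = this
    consider (D) h' where "y = LD h'" | (E) h' where "y = LE h'" | (Q1) j' where "y = LQ j'" "j' \<le> t"
       | (Q2) j' where "y = LQ j'" "t < j'" | (A) "y = LA" | (F) "y = LF"
      by (cases y) (blast, blast, metis not_le, blast, blast)
    then show ?thesis
    proof cases
      case (D h')
      note Y = this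
      have e: "N + t + 2 * t * N = m * h'" using w X Y by simp
      show ?thesis using k_DA[OF t1 _ m] e vx vy X Y by (simp; metis)
    next
      case (E h')
      note Y = this
      then show ?thesis using p X by simp
    next
      case (Q1 j')
      note Y = this
      have e: "N + t + 2 * t * N = (2 * N + 2) * j'" using w X Y by simp
      show ?thesis using k_QA[OF nd m] e X Y by (simp; metis)
    next
      case (Q2 j')
      note Y = this
      then show ?thesis using p X by simp
    next
      case A
      note Y = this
      have e: "N + t + 2 * t * N = N + t + 2 * t * N" using w X Y by simp
      show ?thesis using X Y by simp
    next
      case F
      note Y = this
      then show ?thesis using p X by simp
    qed
  next
    case F
    note X = this
    consider (D) h' where "y = LD h'" | (E) h' where "y = LE h'" | (Q1) j' where "y = LQ j'" "j' \<le> t"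
       | (Q2) j' where "y = LQ j'" "t < j'" | (A) "y = LA" | (F) "y = LF"
      by (cases y) (blast, blast, metis not_le, blast, blast)
    then show ?thesis
    proof cases
      case (D h')
      note Y = this
      then show ?thesis using p X by simp
    next
      case (E h')
      note Y = this
      have e: "2 * N + 2 + 2 * t = m * h'" using w X Y by simp
      show ?thesis using k_EF[OF te o m] e X Y by (simp; metis)
    next
      case (Q1 j')
      note Y = this
      then show ?thesis using p X by simp
    next
      case (Q2 j')
      note Y = this
      have e: "2 * N + 2 + 2 * t = (2 * N + 2) * (m + 1 - j')" using w X Y by simp
      show ?thesis using k_QF[OF ta(1) o N(1) m] e vx vy X Y by (simp; metis)
    next
      case A
      note Y = this
      then show ?thesis using p X by simp
    next
      case F
      note Y = this
      have e: "2 * N + 2 + 2 * t = 2 * N + 2 + 2 * t" using w X Y by simp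
      show ?thesis using X Y by simp
    qed
  qed
qed



theorem proposition4:
  fixes n m :: nat
  assumes "\<exists>k. m = 2 ^ k" and "m \<ge> 4"
    and "odd n" and "n \<ge> 1"
    and "\<not> (n + 2) dvd (m + 2)"
  shows "transmission_irregular (G4_verts n m) (G4_adj n m)"
proof -
  obtain k where mk: "m = 2 ^ k" using assms(1) by blast
  have k2: "k \<ge> 2"
  proof (rule ccontr)
    assume "\<not> k \<ge> 2"
    then have "k = 0 \<or> k = 1" by auto
    then have "m \<le> 2" using mk by auto
    then show False using assms(2) by simp
  qed
  define a where "a = k - 1"
  define t where "t = (2::nat) ^ a"
  have a1: "a \<ge> 1" using k2 a_def by simp
  have ka: "k = Suc a" using k2 a_def by simp
  have mt: "m = 2 * t" using mk ka unfolding t_def by simp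
  define N where "N = n + 1"
  have N2: "N \<ge> 2" using assms(4) N_def by simp
  have Ne: "even N" using assms(3) N_def by simp
  have nd: "\<not> (N + 1) dvd (m + 2)" using assms(5) N_def by (simp add: add.assoc)
  have m1: "m \<ge> 1" using assms(2) by simp
  have t1: "t \<ge> 1" by (simp add: t_def)
  have te: "even t" using a1 t_def by simp
  show ?thesis unfolding transmission_irregular_def inj_on_def
  proof (intro ballI impI)
    fix u v
    assume uV: "u \<in> G4_verts n m" and vV: "v \<in> G4_verts n m"
      and eq: "transmission (G4_verts n m) (G4_adj n m) u = transmission (G4_verts n m) (G4_adj n m) v"
    have eq2: "LT N m (loc n u) = LT N m (loc n v)"
      using eq trans_LT[OF assms(4) m1 uV] trans_LT[OF assms(4) m1 vV] N_def by simp
    have vu: "valid N m (loc n u)" "valid N m (loc n v)" using loc_valid uV vV N_def by auto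
    have wu: "LT N m (loc n u) + par t (loc n u) = D0 N t + wv N m t (loc n u)"
      using LT_w[OF mt t1 vu(1)] .
    have wv': "LT N m (loc n v) + par t (loc n v) = D0 N t + wv N m t (loc n v)"
      using LT_w[OF mt t1 vu(2)] .
    have ev: "even (wv N m t (loc n u))" "even (wv N m t (loc n v))"
      using wv_even[OF mt Ne te] by auto
    have pp: "par t (loc n u) = par t (loc n v)"
    proof (rule ccontr)
      assume ne: "par t (loc n u) \<noteq> par t (loc n v)"
      have "wv N m t (loc n v) = wv N m t (loc n u) + 1 \<or> wv N m t (loc n u) = wv N m t (loc n v) + 1"
        using par01[of t "loc n u"] par01[of t "loc n v"] ne wu wv' eq2 by auto
      then show False using ev by auto
    qed
    then have "wv N m t (loc n u) = wv N m t (loc n v)" using wu wv' eq2 by simp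
    then have "loc n u = loc n v" using wv_inj[OF mt t_def a1 N2 Ne nd vu pp] by blast
    then show "u = v" using unloc_loc uV vV by metis
  qed
qed


end
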